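(* For every integer $k \geq 2$ and every $\varepsilon > 0$ there exist $\delta > 0$ and $n_0$ such that the following holds for every $n \geq n_0$. Let $H$ be an $n$-vertex $k$-graph with $\delta_1(H) \geq (2^{-k+1} + \varepsilon)\binom{n-1}{k-1}$. Then for every pair of distinct vertices $x_1, x_2 \in V(H)$, there are at least $\delta n^{2k-3}$ distinct $(x_1, x_2)$-paths of length two in $H$.
   Context: $\delta_1(H)$ is the minimum number of edges containing a vertex. For $x_1, x_2 \in V(H)$, an $(x_1,x_2)$-path is a subgraph $P' \subseteq H$ which equals the $k$-expansion $P^{(k)}$ of a graph path $P$ with endpoints $x_1, x_2$ (the $k$-expansion replaces each edge $uv$ by a $k$-edge consisting of $u$, $v$ and $k-2$ new vertices belonging to no other edge). The length of the path is its number of edges; thus an $(x_1,x_2)$-path of length two consists of two edges $e \ni x_1$, $f \ni x_2$ sharing exactly one vertex, which differs from $x_1, x_2$. *)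

theory Defs
  imports Complex_Main
begin

definition kgraph :: "nat \<Rightarrow> 'a set \<Rightarrow> 'a set set \<Rightarrow> bool" where
  "kgraph k V E \<longleftrightarrow> finite V \<and> (\<forall>e\<in>E. e \<subseteq> V \<and> card e = k)"

definition vdeg :: "'a set set \<Rightarrow> 'a \<Rightarrow> nat" where
  "vdeg E x = card {e\<in>E. x \<in> e}"

definition min_vdeg :: "'a set \<Rightarrow> 'a set set \<Rightarrow> nat" where
  "min_vdeg V E = Min (vdeg E ` V)"

text \<open>The (x1,x2)-paths of length two, each represented by its edge set {e,f}:
e contains x1, f contains x2, and e and f share exactly one vertex v,
which differs from x1 and x2 (this is exactly the 2-edge k-expansion of the
graph path x1 v x2).\<close>
definition paths2 :: "'a set set \<Rightarrow> 'a \<Rightarrow> 'a \<Rightarrow> 'a set set set" where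
  "paths2 E x1 x2 = {{e, f} | e f. e \<in> E \<and> f \<in> E \<and> x1 \<in> e \<and> x2 \<in> f \<and>
      (\<exists>v. e \<inter> f = {v} \<and> v \<noteq> x1 \<and> v \<noteq> x2)}"

end

theory Submission
  imports Defs
begin

lemma pow_diff_le:
  fixes a b :: real
  assumes "0 \<le> b" "b \<le> a"
  shows "a ^ Suc r - b ^ Suc r \<le> real (Suc r) * (a - b) * a ^ r"
proof (induction r)
  case 0 then show ?case by simp
next
  case (Suc r)
  have "a ^ Suc (Suc r) - b ^ Suc (Suc r) = a * (a ^ Suc r - b ^ Suc r) + b ^ Suc r * (a - b)"
    by (simp add: algebra_simps)
  also have "\<dots> \<le> a * (real (Suc r) * (a - b) * a ^ r) + a ^ Suc r * (a - b)"
    using Suc assms by (intro add_mono mult_left_mono mult_right_mono power_mono) auto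
  also have "\<dots> = real (Suc (Suc r)) * (a - b) * a ^ Suc r"
    by (simp add: algebra_simps)
  finally show ?case .
qed

lemma count_sup:
  assumes "finite V" "T \<subseteq> V"
  shows "card {e. e \<subseteq> V \<and> card e = k \<and> T \<subseteq> e} \<le> card V ^ (k - card T)"
proof -
  have fT: "finite T" using assms finite_subset by blast
  have inj: "inj_on (\<lambda>e. e - T) {e. e \<subseteq> V \<and> card e = k \<and> T \<subseteq> e}"
    by (rule inj_onI) auto
  have img: "(\<lambda>e. e - T) ` {e. e \<subseteq> V \<and> card e = k \<and> T \<subseteq> e} \<subseteq> {S. S \<subseteq> V \<and> card S = k - card T}"
    using fT by (auto simp: card_Diff_subset)
  have "card {e. e \<subseteq> V \<and> card e = k \<and> T \<subseteq> e} \<le> card {S. S \<subseteq> V \<and> card S = k - card T}"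
    using card_inj_on_le[OF inj img] assms by (simp add: n_subsets)
  also have "\<dots> = card V choose (k - card T)" using assms by (simp add: n_subsets)
  also have "\<dots> \<le> card V ^ (k - card T)"
    using binomial_fact_pow[of "card V" "k - card T"]
    by (metis dual_order.trans fact_ge_1 mult_le_mono2 mult.right_neutral)
  finally show ?thesis .
qed

lemma binom_lower:
  assumes "r \<le> N + 1"
  shows "(real N - real r + 1) ^ r \<le> fact r * real (N choose r)"
proof -
  have "fact r * real (N choose r) = (\<Prod>i = 0..<r. real N - real i)"
    by (simp add: binomial_gbinomial gbinomial_mult_fact)
  also have "\<dots> \<ge> (\<Prod>i = 0..<r. real N - real r + 1)"
    using assms by (intro prod_mono) auto
  finally show ?thesis by simp
qed

lemma binom_upper:
  "fact r * real (p choose r) \<le> real p ^ r"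
proof -
  have "(p choose r) * fact r \<le> p ^ r" by (rule binomial_fact_pow)
  then have "real ((p choose r) * fact r) \<le> real (p ^ r)" by linarith
  then show ?thesis by (simp add: mult.commute)
qed

lemma bad_bound:
  fixes V :: "'a set"
  assumes kg: "kgraph (Suc r) V E" and r1: "r \<ge> 1"
    and x1: "x1 \<in> V" and x2: "x2 \<in> V" and x12: "x1 \<noteq> x2" and n: "card V = n"
  shows "(\<Sum>v\<in>V - {x1,x2}. card {(e,f). e \<in> E \<and> x1 \<in> e \<and> x2 \<notin> e \<and> v \<in> e \<and>
            f \<in> E \<and> x2 \<in> f \<and> x1 \<notin> f \<and> v \<in> f \<and> (\<exists>u. u \<noteq> v \<and> u \<in> e \<and> u \<in> f)})
         \<le> n ^ (2 * r - 2)"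
proof -
  define W where "W = V - {x1, x2}"
  define B where "B v = {(e,f). e \<in> E \<and> x1 \<in> e \<and> x2 \<notin> e \<and> v \<in> e \<and>
            f \<in> E \<and> x2 \<in> f \<and> x1 \<notin> f \<and> v \<in> f \<and> (\<exists>u. u \<noteq> v \<and> u \<in> e \<and> u \<in> f)}" for v
  define S where "S T = {e. e \<subseteq> V \<and> card e = Suc r \<and> T \<subseteq> e}" for T
  have fV: "finite V" using kg by (simp add: kgraph_def)
  have Esub: "\<And>e. e \<in> E \<Longrightarrow> e \<subseteq> V \<and> card e = Suc r" using kg by (simp add: kgraph_def)
  have fS: "finite (S T)" for T by (rule finite_subset[of _ "Pow V"]) (auto simp: S_def fV)
  show ?thesis
  proof (cases "r = 1")
    case True
    have "B v = {}" if "v \<in> W" for v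
    proof (rule ccontr)
      assume "B v \<noteq> {}"
      then obtain e f u where ef: "e \<in> E" "x1 \<in> e" "x2 \<notin> e" "v \<in> e" "x1 \<notin> f" "u \<noteq> v" "u \<in> e" "u \<in> f"
        by (auto simp: B_def)
      have "{x1, v, u} \<subseteq> e" using ef by auto
      moreover have "v \<noteq> x1" using that by (auto simp: W_def)
      moreover have "u \<noteq> x1" using ef by auto
      ultimately have "card {x1, v, u} \<le> card e" using Esub[OF ef(1)] by (intro card_mono) (auto intro: finite_subset[OF _ fV])
      moreover have "card {x1, v, u} = 3" using \<open>v \<noteq> x1\<close> \<open>u \<noteq> x1\<close> ef by auto
      ultimately show False using Esub[OF ef(1)] True by simp
    qed
    then show ?thesis by (simp add: B_def[symmetric] W_def[symmetric])
  next
    case False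
    then have r2: "r \<ge> 2" using r1 by simp
    have Bv: "card (B v) \<le> n * n ^ (2 * r - 4)" if v: "v \<in> W" for v
    proof -
      have "B v \<subseteq> (\<Union>u\<in>W - {v}. S {x1, v, u} \<times> S {x2, v, u})"
      proof
        fix ef assume "ef \<in> B v"
        then obtain e f u where ef: "ef = (e, f)" "e \<in> E" "x1 \<in> e" "x2 \<notin> e" "v \<in> e" "f \<in> E" "x2 \<in> f"
          "x1 \<notin> f" "v \<in> f" "u \<noteq> v" "u \<in> e" "u \<in> f"
          by (auto simp: B_def)
        have "u \<in> W - {v}" using ef Esub[OF ef(2)] by (auto simp: W_def)
        moreover have "e \<in> S {x1, v, u}" "f \<in> S {x2, v, u}" using ef Esub[OF ef(2)] Esub[OF ef(6)] by (auto simp: S_def)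
        ultimately show "ef \<in> (\<Union>u\<in>W - {v}. S {x1, v, u} \<times> S {x2, v, u})" using ef(1) by blast
      qed
      then have "card (B v) \<le> card (\<Union>u\<in>W - {v}. S {x1, v, u} \<times> S {x2, v, u})"
        using fV fS by (intro card_mono) (auto simp: W_def)
      also have "\<dots> \<le> (\<Sum>u\<in>W - {v}. card (S {x1, v, u} \<times> S {x2, v, u}))"
        by (rule card_UN_le) (simp add: W_def fV)
      also have "\<dots> \<le> (\<Sum>u\<in>W - {v}. n ^ (r - 2) * n ^ (r - 2))"
      proof (rule sum_mono)
        fix u assume u: "u \<in> W - {v}"
        have c1: "card {x1, v, u} = 3" "card {x2, v, u} = 3" using u v x12 by (auto simp: W_def)
        have "card (S {x1, v, u}) \<le> n ^ (Suc r - 3)"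
          using count_sup[OF fV, of "{x1, v, u}" "Suc r"] c1 u v x1 n by (auto simp: S_def W_def)
        moreover have "card (S {x2, v, u}) \<le> n ^ (Suc r - 3)"
          using count_sup[OF fV, of "{x2, v, u}" "Suc r"] c1 u v x2 n by (auto simp: S_def W_def)
        ultimately show "card (S {x1, v, u} \<times> S {x2, v, u}) \<le> n ^ (r - 2) * n ^ (r - 2)"
          unfolding card_cartesian_product numeral_2_eq_2 numeral_3_eq_3 by (simp add: mult_le_mono)
      qed
      also have "\<dots> = card (W - {v}) * n ^ (2 * r - 4)"
      proof -
        have "r - 2 + (r - 2) = 2 * r - 4" using r2 by simp
        then show ?thesis by (simp add: power_add[symmetric])
      qed
      also have "\<dots> \<le> n * n ^ (2 * r - 4)"
      proof -
        have "card (W - {v}) \<le> n" using fV n by (metis Diff_subset W_def card_mono order_trans)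
        then show ?thesis by simp
      qed
      finally show ?thesis .
    qed
    have "(\<Sum>v\<in>W. card (B v)) \<le> (\<Sum>v\<in>W. n * n ^ (2 * r - 4))" by (rule sum_mono) (rule Bv)
    also have "\<dots> = card W * (n * n ^ (2 * r - 4))" by simp
    also have "\<dots> \<le> n * (n * n ^ (2 * r - 4))"
    proof -
      have "card W \<le> n" using fV n by (metis Diff_subset W_def card_mono)
      then show ?thesis by simp
    qed
    also have "\<dots> = n ^ (2 * r - 2)"
    proof -
      have "2 * r - 2 = Suc (Suc (2 * r - 4))" using r2 by simp
      then show ?thesis by simp
    qed
    finally show ?thesis by (simp add: B_def W_def)
  qed
qed

lemma count_main:
  fixes V :: "'a set" and \<eta> \<gamma> :: real
  assumes kg: "kgraph (Suc r) V E" and r1: "r \<ge> 1"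
    and x1: "x1 \<in> V" and x2: "x2 \<in> V" and x12: "x1 \<noteq> x2" and n: "card V = n"
    and eta: "\<eta> > 0" and gam: "\<gamma> > 0"
    and hP: "real (card {v \<in> V - {x1, x2}. \<eta> * real n ^ (r - 1) \<le> real (card {e\<in>E. x1 \<in> e \<and> x2 \<notin> e \<and> v \<in> e})})
         > (1/2 + \<gamma>) * real n"
    and hQ: "real (card {v \<in> V - {x2, x1}. \<eta> * real n ^ (r - 1) \<le> real (card {e\<in>E. x2 \<in> e \<and> x1 \<notin> e \<and> v \<in> e})})
         > (1/2 + \<gamma>) * real n"
    and nbig: "\<gamma> * \<eta> ^ 2 * real n \<ge> 1"
  shows "real (card (paths2 E x1 x2)) \<ge> \<gamma> * \<eta> ^ 2 * real n ^ (2 * r - 1)"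
proof -
  define W where "W = V - {x1, x2}"
  define d1 where "d1 v = card {e\<in>E. x1 \<in> e \<and> x2 \<notin> e \<and> v \<in> e}" for v
  define d2 where "d2 v = card {e\<in>E. x2 \<in> e \<and> x1 \<notin> e \<and> v \<in> e}" for v
  define P where "P = {v \<in> W. \<eta> * real n ^ (r - 1) \<le> real (d1 v)}"
  define Q where "Q = {v \<in> W. \<eta> * real n ^ (r - 1) \<le> real (d2 v)}"
  define Good where "Good = {(e,f). e \<in> E \<and> x1 \<in> e \<and> x2 \<notin> e \<and> f \<in> E \<and> x2 \<in> f \<and> x1 \<notin> f \<and> (\<exists>v. e \<inter> f = {v})}"
  define G where "G v = {(e,f). e \<in> E \<and> x1 \<in> e \<and> x2 \<notin> e \<and> f \<in> E \<and> x2 \<in> f \<and> x1 \<notin> f \<and> e \<inter> f = {v}}" for v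
  define B where "B v = {(e,f). e \<in> E \<and> x1 \<in> e \<and> x2 \<notin> e \<and> v \<in> e \<and>
            f \<in> E \<and> x2 \<in> f \<and> x1 \<notin> f \<and> v \<in> f \<and> (\<exists>u. u \<noteq> v \<and> u \<in> e \<and> u \<in> f)}" for v
  define X where "X = real n ^ (2 * r - 2)"
  have fV: "finite V" using kg by (simp add: kgraph_def)
  have Esub: "\<And>e. e \<in> E \<Longrightarrow> e \<subseteq> V \<and> card e = Suc r" using kg by (simp add: kgraph_def)
  have fE: "finite E" using Esub fV by (meson finite_Pow_iff finite_subset subsetI PowI)
  have fW: "finite W" using fV by (simp add: W_def)
  have cW: "card W \<le> n" using fV n by (metis Diff_subset W_def card_mono)
  have fEE: "finite (E \<times> E)" using fE by simp
  have m1: "card Good \<le> card (paths2 E x1 x2)"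
  proof -
    have inj: "inj_on (\<lambda>(e,f). {e, f}) Good"
    proof (rule inj_onI)
      fix a b assume a: "a \<in> Good" and b: "b \<in> Good" and eq: "(\<lambda>(e,f). {e, f}) a = (\<lambda>(e,f). {e, f}) b"
      obtain e f where ef: "a = (e, f)" by (cases a)
      obtain e' f' where ef': "b = (e', f')" by (cases b)
      have "{e, f} = {e', f'}" using eq ef ef' by simp
      moreover have "x1 \<in> e" "x1 \<notin> f" "x1 \<in> e'" "x1 \<notin> f'" using a b ef ef' by (auto simp: Good_def)
      ultimately have "e = e' \<and> f = f'" by (metis doubleton_eq_iff)
      then show "a = b" using ef ef' by simp
    qed
    have img: "(\<lambda>(e,f). {e, f}) ` Good \<subseteq> paths2 E x1 x2"
    proof
      fix s assume "s \<in> (\<lambda>(e,f). {e, f}) ` Good"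
      then obtain e f v where "s = {e, f}" "e \<in> E" "x1 \<in> e" "x2 \<notin> e" "f \<in> E" "x2 \<in> f" "x1 \<notin> f" "e \<inter> f = {v}"
        by (auto simp: Good_def)
      then show "s \<in> paths2 E x1 x2" unfolding paths2_def by blast
    qed
    have fin: "finite (paths2 E x1 x2)"
      by (rule finite_subset[of _ "Pow E"]) (auto simp: paths2_def fE)
    show ?thesis using card_inj_on_le[OF inj img fin] .
  qed
  have m2: "(\<Sum>v\<in>W. card (G v)) \<le> card Good"
  proof -
    have fG: "finite (G v)" for v by (rule finite_subset[OF _ fEE]) (auto simp: G_def)
    have "(\<Sum>v\<in>W. card (G v)) = card (\<Union>v\<in>W. G v)"
    proof (rule card_UN_disjoint[symmetric])
      show "finite W" by (rule fW)
      show "\<forall>v\<in>W. finite (G v)" using fG by blast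
      show "\<forall>v\<in>W. \<forall>w\<in>W. v \<noteq> w \<longrightarrow> G v \<inter> G w = {}" by (auto simp: G_def)
    qed
    also have "\<dots> \<le> card Good"
      by (rule card_mono) (auto intro: finite_subset[OF _ fEE] simp: Good_def G_def)
    finally show ?thesis .
  qed
  have m3: "d1 v * d2 v \<le> card (G v) + card (B v)" for v
  proof -
    have "{e\<in>E. x1 \<in> e \<and> x2 \<notin> e \<and> v \<in> e} \<times> {e\<in>E. x2 \<in> e \<and> x1 \<notin> e \<and> v \<in> e} \<subseteq> G v \<union> B v"
      by (auto simp: G_def B_def)
    then have "card ({e\<in>E. x1 \<in> e \<and> x2 \<notin> e \<and> v \<in> e} \<times> {e\<in>E. x2 \<in> e \<and> x1 \<notin> e \<and> v \<in> e}) \<le> card (G v \<union> B v)"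
      by (intro card_mono) (auto intro: finite_subset[OF _ fEE] simp: G_def B_def)
    also have "\<dots> \<le> card (G v) + card (B v)" by (rule card_Un_le)
    finally show ?thesis by (simp add: d1_def d2_def card_cartesian_product)
  qed
  have m4: "(\<Sum>v\<in>W. card (B v)) \<le> n ^ (2 * r - 2)"
    using bad_bound[OF kg r1 x1 x2 x12 n] by (simp add: B_def W_def)
  have m34: "(\<Sum>v\<in>W. d1 v * d2 v) \<le> card (paths2 E x1 x2) + n ^ (2 * r - 2)"
  proof -
    have "(\<Sum>v\<in>W. d1 v * d2 v) \<le> (\<Sum>v\<in>W. card (G v) + card (B v))" by (rule sum_mono) (rule m3)
    also have "\<dots> = (\<Sum>v\<in>W. card (G v)) + (\<Sum>v\<in>W. card (B v))" by (rule sum.distrib)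
    finally show ?thesis using m1 m2 m4 by linarith
  qed
  have m6: "real (card (P \<inter> Q)) > 2 * \<gamma> * real n"
  proof -
    have fP: "finite P" "finite Q" using fW by (auto simp: P_def Q_def)
    have eqn: "card P + card Q = card (P \<union> Q) + card (P \<inter> Q)" using card_Un_Int[OF fP] .
    have "P \<union> Q \<subseteq> W" by (auto simp: P_def Q_def)
    then have "card (P \<union> Q) \<le> card W" using fW by (rule card_mono[rotated])
    then have u: "real (card (P \<union> Q)) \<le> real n" using cW by linarith
    have eP: "P = {v \<in> V - {x1, x2}. \<eta> * real n ^ (r - 1) \<le> real (card {e\<in>E. x1 \<in> e \<and> x2 \<notin> e \<and> v \<in> e})}"
      by (simp add: P_def W_def d1_def)
    have eQ: "Q = {v \<in> V - {x2, x1}. \<eta> * real n ^ (r - 1) \<le> real (card {e\<in>E. x2 \<in> e \<and> x1 \<notin> e \<and> v \<in> e})}"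
      by (auto simp: Q_def W_def d2_def)
    have p1: "real (card P) > (1/2 + \<gamma>) * real n" using hP by (subst eP)
    have q1: "real (card Q) > (1/2 + \<gamma>) * real n" using hQ by (subst eQ)
    have "real (card P) + real (card Q) = real (card (P \<union> Q)) + real (card (P \<inter> Q))"
      using eqn by (metis of_nat_add)
    then show ?thesis using p1 q1 u by (simp add: algebra_simps)
  qed
  have m5: "real (card (P \<inter> Q)) * (\<eta> ^ 2 * X) \<le> real (\<Sum>v\<in>W. d1 v * d2 v)"
  proof -
    have "real (card (P \<inter> Q)) * (\<eta> ^ 2 * X) = (\<Sum>v\<in>P \<inter> Q. \<eta> ^ 2 * X)" by simp
    also have "\<dots> \<le> (\<Sum>v\<in>P \<inter> Q. real (d1 v * d2 v))"
    proof (rule sum_mono)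
      fix v assume v: "v \<in> P \<inter> Q"
      then have h1: "\<eta> * real n ^ (r - 1) \<le> real (d1 v)" "\<eta> * real n ^ (r - 1) \<le> real (d2 v)"
        by (auto simp: P_def Q_def)
      have h0: "0 \<le> \<eta> * real n ^ (r - 1)" using eta by simp
      have "(\<eta> * real n ^ (r - 1)) * (\<eta> * real n ^ (r - 1)) \<le> real (d1 v) * real (d2 v)"
        using h1 h0 by (intro mult_mono) auto
      moreover have "(\<eta> * real n ^ (r - 1)) * (\<eta> * real n ^ (r - 1)) = \<eta> ^ 2 * X"
      proof -
        have "r - 1 + (r - 1) = 2 * r - 2" using r1 by simp
        then have "real n ^ (r - 1) * real n ^ (r - 1) = X" unfolding X_def by (metis power_add)
        then show ?thesis by (simp add: power2_eq_square algebra_simps)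
      qed
      ultimately show "\<eta> ^ 2 * X \<le> real (d1 v * d2 v)" by simp
    qed
    also have "\<dots> \<le> (\<Sum>v\<in>W. real (d1 v * d2 v))"
      by (rule sum_mono2) (auto simp: fW P_def)
    finally show ?thesis by simp
  qed
  have X0: "X \<ge> 0" by (simp add: X_def)
  have nX: "real n ^ (2 * r - 1) = real n * X"
  proof -
    have "2 * r - 1 = Suc (2 * r - 2)" using r1 by simp
    then show ?thesis by (simp add: X_def)
  qed
  have f1: "real (card (paths2 E x1 x2)) \<ge> real (card (P \<inter> Q)) * (\<eta> ^ 2 * X) - X"
  proof -
    have "real (\<Sum>v\<in>W. d1 v * d2 v) \<le> real (card (paths2 E x1 x2)) + X"
      using m34 unfolding X_def by (metis of_nat_add of_nat_le_iff of_nat_power)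
    then show ?thesis using m5 by linarith
  qed
  have f2: "real (card (P \<inter> Q)) * (\<eta> ^ 2 * X) \<ge> 2 * \<gamma> * real n * (\<eta> ^ 2 * X)"
    using m6 X0 by (intro mult_right_mono) auto
  have f3: "X \<le> \<gamma> * \<eta> ^ 2 * real n * X" using nbig X0 by (metis mult_right_mono mult_1)
  have "\<gamma> * \<eta> ^ 2 * real n ^ (2 * r - 1) = \<gamma> * \<eta> ^ 2 * real n * X" unfolding nX by (simp add: mult.assoc)
  moreover have "2 * \<gamma> * real n * (\<eta> ^ 2 * X) = 2 * (\<gamma> * \<eta> ^ 2 * real n * X)" by (simp add: algebra_simps)
  ultimately show ?thesis using f1 f2 f3 by linarith
qed

lemma side:
  fixes V :: "'a set" and E and x1 x2 :: 'a and \<epsilon> \<eta> :: real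
  assumes kg: "kgraph (Suc r) V E" and r1: "r \<ge> 1"
    and x1: "x1 \<in> V" and x2: "x2 \<in> V" and x12: "x1 \<noteq> x2"
    and n: "card V = n" and eta: "\<eta> > 0" and eps: "\<epsilon> > 0" "\<epsilon> \<le> 1/2"
    and deg: "real (vdeg E x1) \<ge> ((1/2)^r + \<epsilon>) * real ((n - 1) choose r)"
    and nbig: "real n \<ge> 4 * (real r ^ 2 + fact r) / \<epsilon>"
    and etasmall: "fact r * \<eta> \<le> \<epsilon> / 4"
  shows "real (card {v \<in> V - {x1, x2}. \<eta> * real n ^ (r - 1) \<le> real (card {e\<in>E. x1 \<in> e \<and> x2 \<notin> e \<and> v \<in> e})})
         > (1/2 + \<epsilon> / (4 * real r)) * real n"
proof -
  define E1 where "E1 = {e\<in>E. x1 \<in> e \<and> x2 \<notin> e}"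
  define E12 where "E12 = {e\<in>E. x1 \<in> e \<and> x2 \<in> e}"
  define W where "W = V - {x1, x2}"
  define d where "d v = card {e\<in>E. x1 \<in> e \<and> x2 \<notin> e \<and> v \<in> e}" for v
  define P where "P = {v \<in> W. \<eta> * real n ^ (r - 1) \<le> real (d v)}"
  define p where "p = card P"
  define N where "N = real n"
  have fV: "finite V" using kg by (simp add: kgraph_def)
  have Esub: "\<And>e. e \<in> E \<Longrightarrow> e \<subseteq> V \<and> card e = Suc r" using kg by (simp add: kgraph_def)
  have fE: "finite E" using Esub fV by (meson finite_Pow_iff finite_subset subsetI PowI)
  have fW: "finite W" using fV by (simp add: W_def)
  have fP: "finite P" using fW by (simp add: P_def)
  have PW: "P \<subseteq> W" by (auto simp: P_def)
  have nr: "n \<ge> Suc r" using Esub x1 kg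
  proof -
    have r1': "1 \<le> real r" using r1 by simp
    then have "real r * 1 \<le> real r * real r" by (intro mult_left_mono) auto
    then have "real r + 1 \<le> 8 * real r ^ 2" using r1' unfolding power2_eq_square by linarith
    also have "\<dots> \<le> 4 * (real r ^ 2 + fact r) / (1/2)" by simp
    also have "\<dots> \<le> 4 * (real r ^ 2 + fact r) / \<epsilon>"
      using eps by (intro divide_left_mono) (auto intro: add_nonneg_nonneg)
    finally show ?thesis using nbig by linarith
  qed
  have N0: "N > 0" using nr by (simp add: N_def)
  have s1: "vdeg E x1 = card E1 + card E12"
  proof -
    have "{e\<in>E. x1 \<in> e} = E1 \<union> E12" by (auto simp: E1_def E12_def)
    moreover have "E1 \<inter> E12 = {}" by (auto simp: E1_def E12_def)
    ultimately show ?thesis using fE unfolding vdeg_def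
      by (simp add: E1_def E12_def card_Un_disjoint)
  qed
  have s2: "card E12 \<le> n ^ (r - 1)"
  proof -
    have "E12 \<subseteq> {e. e \<subseteq> V \<and> card e = Suc r \<and> {x1, x2} \<subseteq> e}"
      using Esub by (auto simp: E12_def)
    then have "card E12 \<le> card {e. e \<subseteq> V \<and> card e = Suc r \<and> {x1, x2} \<subseteq> e}"
      by (intro card_mono) (auto intro: finite_subset[of _ "Pow V"] simp: fV)
    also have "\<dots> \<le> card V ^ (Suc r - card {x1, x2})"
      using count_sup[OF fV, of "{x1,x2}"] x1 x2 by auto
    finally show ?thesis using x12 n by simp
  qed
  define A where "A = {e\<in>E1. e - {x1} \<subseteq> P}"
  have s3a: "card A \<le> p choose r"
  proof -
    have inj: "inj_on (\<lambda>e. e - {x1}) A"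
      by (rule inj_onI) (auto simp: A_def E1_def)
    have img: "(\<lambda>e. e - {x1}) ` A \<subseteq> {S. S \<subseteq> P \<and> card S = r}"
      using Esub by (auto simp: A_def E1_def)
    have "card A \<le> card {S. S \<subseteq> P \<and> card S = r}"
      using card_inj_on_le[OF inj img] fP by simp
    then show ?thesis using n_subsets[OF fP] by (simp add: p_def)
  qed
  have s3b: "E1 \<subseteq> A \<union> (\<Union>v\<in>W - P. {e\<in>E1. v \<in> e})"
  proof
    fix e assume e: "e \<in> E1"
    show "e \<in> A \<union> (\<Union>v\<in>W - P. {e\<in>E1. v \<in> e})"
    proof (cases "e - {x1} \<subseteq> P")
      case True then show ?thesis using e by (simp add: A_def)
    next
      case False
      then obtain v where "v \<in> e" "v \<noteq> x1" "v \<notin> P" by auto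
      moreover have "v \<in> W" using e Esub \<open>v \<in> e\<close> \<open>v \<noteq> x1\<close> by (auto simp: E1_def W_def)
      ultimately show ?thesis using e by auto
    qed
  qed
  have s3c: "real (card E1) \<le> real (p choose r) + \<eta> * N ^ r"
  proof -
    have fE1: "finite E1" using fE by (simp add: E1_def)
    have u1: "card E1 \<le> card (A \<union> (\<Union>v\<in>W - P. {e\<in>E1. v \<in> e}))"
      using s3b fE1 fW by (intro card_mono) (auto simp: A_def)
    have u2: "card (A \<union> (\<Union>v\<in>W - P. {e\<in>E1. v \<in> e})) \<le> card A + card (\<Union>v\<in>W - P. {e\<in>E1. v \<in> e})"
      by (rule card_Un_le)
    have u3: "card (\<Union>v\<in>W - P. {e\<in>E1. v \<in> e}) \<le> (\<Sum>v\<in>W - P. card {e\<in>E1. v \<in> e})"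
      by (rule card_UN_le) (simp add: fW)
    have "card E1 \<le> card A + (\<Sum>v\<in>W - P. card {e\<in>E1. v \<in> e})"
      using u1 u2 u3 by linarith
    then have c1: "real (card E1) \<le> real (card A) + (\<Sum>v\<in>W - P. real (card {e\<in>E1. v \<in> e}))"
      by (metis of_nat_add of_nat_le_iff of_nat_sum)
    have "(\<Sum>v\<in>W - P. real (card {e\<in>E1. v \<in> e})) \<le> (\<Sum>v\<in>W - P. \<eta> * N ^ (r - 1))"
    proof (rule sum_mono)
      fix v assume "v \<in> W - P"
      then have "real (d v) < \<eta> * real n ^ (r - 1)" by (auto simp: P_def)
      moreover have "{e\<in>E1. v \<in> e} = {e\<in>E. x1 \<in> e \<and> x2 \<notin> e \<and> v \<in> e}" by (auto simp: E1_def)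
      ultimately show "real (card {e\<in>E1. v \<in> e}) \<le> \<eta> * N ^ (r - 1)" by (simp add: d_def N_def)
    qed
    also have "\<dots> = real (card (W - P)) * (\<eta> * N ^ (r - 1))" by simp
    also have "\<dots> \<le> N * (\<eta> * N ^ (r - 1))"
    proof (intro mult_right_mono)
      have "card (W - P) \<le> card V" using fV by (intro card_mono) (auto simp: W_def)
      then show "real (card (W - P)) \<le> N" using n by (simp add: N_def)
    qed (use eta N0 in auto)
    also have "\<dots> = \<eta> * N ^ r" using r1 by (cases r) (auto simp: algebra_simps)
    finally show ?thesis using c1 s3a by linarith
  qed
  define a where "a = (1/2::real)^r"
  define \<gamma> where "\<gamma> = \<epsilon> / (4 * real r)"
  define Y where "Y = N ^ (r - 1)"
  define C where "C = real ((n - 1) choose r)"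
  have NY: "N ^ r = N * Y" using r1 by (cases r) (auto simp: Y_def)
  have Y0: "Y \<ge> 0" using N0 by (simp add: Y_def)
  have fr: "fact r > (0::real)" by simp
  have a0: "a > 0" "a \<le> 1/2" using power_decreasing[of 1 r "1/2::real"] r1 by (auto simp: a_def)
  have b1: "real (card E1) \<ge> (a + \<epsilon>) * C - Y"
  proof -
    have "real (card E12) \<le> real n ^ (r - 1)" using s2 by (metis of_nat_le_iff of_nat_power)
    moreover have "real (vdeg E x1) = real (card E1) + real (card E12)" using s1 by simp
    ultimately show ?thesis using deg unfolding a_def C_def Y_def N_def by linarith
  qed
  have b2: "fact r * C \<ge> (N - real r) ^ r"
  proof -
    have "(real (n - 1) - real r + 1) ^ r \<le> fact r * real ((n - 1) choose r)"
      by (rule binom_lower) (use nr in simp)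
    moreover have "real (n - 1) - real r + 1 = N - real r" using nr by (simp add: N_def of_nat_diff)
    ultimately show ?thesis unfolding C_def by (metis (no_types, lifting))
  qed
  have b3: "(N - real r) ^ r \<ge> N * Y - real r * real r * Y"
  proof -
    have "N ^ Suc (r - 1) - (N - real r) ^ Suc (r - 1) \<le> real (Suc (r - 1)) * (N - (N - real r)) * N ^ (r - 1)"
      by (rule pow_diff_le) (use nr in \<open>auto simp: N_def\<close>)
    then show ?thesis using r1 NY by (simp add: Y_def)
  qed
  have b4: "fact r * real (p choose r) \<le> real p ^ r" by (rule binom_upper)
  have hB: "(a + \<epsilon>) * (fact r * C) \<ge> (a + \<epsilon>) * (N * Y - real r * real r * Y)"
    using b2 b3 a0 eps by (intro mult_left_mono) auto
  have hC: "(a + \<epsilon>) * (real r * real r * Y) \<le> real r * real r * Y"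
    using a0 eps Y0 by (intro mult_left_le_one_le) auto
  have hD: "fact r * \<eta> * (N * Y) \<le> \<epsilon> / 4 * (N * Y)"
    using etasmall N0 Y0 by (intro mult_right_mono) auto
  have hE: "(real r * real r + fact r) * Y \<le> \<epsilon> / 4 * (N * Y)"
  proof -
    have "real r * real r + fact r \<le> \<epsilon> / 4 * N"
      using nbig eps by (simp add: N_def field_simps power2_eq_square)
    then show ?thesis using Y0 by (metis mult.assoc mult_right_mono)
  qed
  have hF: "fact r * real (card E1) \<le> real p ^ r + fact r * \<eta> * (N * Y)"
  proof -
    have "fact r * real (card E1) \<le> fact r * (real (p choose r) + \<eta> * N ^ r)"
      using s3c by (intro mult_left_mono) auto
    moreover have "fact r * (real (p choose r) + \<eta> * N ^ r) = fact r * real (p choose r) + fact r * \<eta> * (N * Y)"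
      by (simp add: NY algebra_simps)
    ultimately show ?thesis using b4 by linarith
  qed
  have hG: "fact r * real (card E1) \<ge> (a + \<epsilon>) * (fact r * C) - fact r * Y"
  proof -
    have "fact r * real (card E1) \<ge> fact r * ((a + \<epsilon>) * C - Y)"
      using b1 fr by (intro mult_left_mono) auto
    then show ?thesis by (simp add: algebra_simps)
  qed
  have key: "real p ^ r \<ge> (a + \<epsilon> / 2) * (N * Y)"
  proof -
    have e1: "(a + \<epsilon>) * (N * Y - real r * real r * Y) = (a + \<epsilon>) * (N * Y) - (a + \<epsilon>) * (real r * real r * Y)"
      by (simp add: algebra_simps)
    have e2: "(a + \<epsilon> / 2) * (N * Y) = (a + \<epsilon>) * (N * Y) - \<epsilon> / 4 * (N * Y) - \<epsilon> / 4 * (N * Y)"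
      by (simp add: algebra_simps)
    have e3: "(real r * real r + fact r) * Y = real r * real r * Y + fact r * Y"
      by (simp add: algebra_simps)
    show ?thesis using hB hC hD hE hF hG e1 e2 e3 by linarith
  qed
  have g0: "\<gamma> > 0" "\<gamma> \<le> 1/2" using eps r1 by (auto simp: \<gamma>_def field_simps)
  have hH: "(1/2 + \<gamma>) ^ r \<le> a + \<epsilon> / 4"
  proof -
    have "(1/2 + \<gamma>) ^ Suc (r - 1) - (1/2) ^ Suc (r - 1) \<le> real (Suc (r - 1)) * ((1/2 + \<gamma>) - 1/2) * (1/2 + \<gamma>) ^ (r - 1)"
      by (rule pow_diff_le) (use g0 in auto)
    moreover have "(1/2 + \<gamma>) ^ (r - 1) \<le> 1" using g0 by (intro power_le_one) auto
    moreover have "real r * \<gamma> = \<epsilon> / 4" using r1 by (simp add: \<gamma>_def)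
    ultimately have "(1/2 + \<gamma>) ^ r - a \<le> \<epsilon> / 4 * (1/2 + \<gamma>) ^ (r - 1)"
      using r1 by (simp add: a_def mult.assoc)
    moreover have "\<epsilon> / 4 * (1/2 + \<gamma>) ^ (r - 1) \<le> \<epsilon> / 4"
      using \<open>(1/2 + \<gamma>) ^ (r - 1) \<le> 1\<close> eps by (simp add: mult_left_le)
    ultimately show ?thesis by linarith
  qed
  have "((1/2 + \<gamma>) * N) ^ r < real p ^ r"
  proof -
    have "((1/2 + \<gamma>) * N) ^ r = (1/2 + \<gamma>) ^ r * (N * Y)" by (simp add: power_mult_distrib NY)
    also have "\<dots> \<le> (a + \<epsilon> / 4) * (N * Y)" using hH N0 Y0 by (intro mult_right_mono) auto
    also have "\<dots> < (a + \<epsilon> / 2) * (N * Y)"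
    proof -
      have "N * Y > 0" using N0 by (simp add: Y_def)
      then show ?thesis using eps by (intro mult_strict_right_mono) auto
    qed
    finally show ?thesis using key by linarith
  qed
  then have "(1/2 + \<gamma>) * N < real p" by (rule power_less_imp_less_base) simp
  then show ?thesis by (simp add: p_def P_def d_def N_def W_def \<gamma>_def)
qed



theorem lemma4p8:
  "\<forall>k::nat. k \<ge> 2 \<longrightarrow> (\<forall>\<epsilon>::real. \<epsilon> > 0 \<longrightarrow>
     (\<exists>\<delta>::real. \<delta> > 0 \<and> (\<exists>n0::nat. \<forall>n\<ge>n0. \<forall>(V::nat set) E.
        kgraph k V E \<and> card V = n \<and>
        real (min_vdeg V E) \<ge> (2 powr (1 - real k) + \<epsilon>) * real ((n - 1) choose (k - 1))
        \<longrightarrow> (\<forall>x1\<in>V. \<forall>x2\<in>V. x1 \<noteq> x2 \<longrightarrow>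
              real (card (paths2 E x1 x2)) \<ge> \<delta> * real n ^ (2 * k - 3)))))"
proof (intro allI impI)
  fix k :: nat and \<epsilon> :: real
  assume k2: "k \<ge> 2" and eps0: "\<epsilon> > 0"
  obtain r where kr: "k = Suc r" and r1: "r \<ge> 1" using k2 by (cases k) auto
  define e where "e = min \<epsilon> (1/2)"
  have e0: "e > 0" "e \<le> 1/2" "e \<le> \<epsilon>" using eps0 by (auto simp: e_def)
  define \<eta> where "\<eta> = e / (4 * fact r)"
  define \<gamma> where "\<gamma> = e / (4 * real r)"
  define \<delta> where "\<delta> = \<gamma> * \<eta> ^ 2"
  have eta0: "\<eta> > 0" using e0 by (simp add: \<eta>_def)
  have gam0: "\<gamma> > 0" using e0 r1 by (simp add: \<gamma>_def)
  have del0: "\<delta> > 0" using eta0 gam0 by (simp add: \<delta>_def)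
  have etas: "fact r * \<eta> \<le> e / 4" by (simp add: \<eta>_def)
  define n0 where "n0 = nat \<lceil>max (4 * (real r ^ 2 + fact r) / e) (1 / \<delta>)\<rceil>"
  have pw: "2 powr (1 - real k) = (1/2 :: real) ^ r"
  proof -
    have "1 - real k = - real r" using kr by simp
    then have "2 powr (1 - real k) = inverse (2 powr real r)" by (simp add: powr_minus)
    also have "2 powr real r = (2::real) ^ r" by (rule powr_realpow) simp
    also have "inverse ((2::real) ^ r) = (1/2) ^ r" by (simp add: power_one_over inverse_eq_divide)
    finally show ?thesis .
  qed
  show "\<exists>\<delta>>0. \<exists>n0. \<forall>n\<ge>n0. \<forall>(V::nat set) E.
        kgraph k V E \<and> card V = n \<and>
        real (min_vdeg V E) \<ge> (2 powr (1 - real k) + \<epsilon>) * real ((n - 1) choose (k - 1))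
        \<longrightarrow> (\<forall>x1\<in>V. \<forall>x2\<in>V. x1 \<noteq> x2 \<longrightarrow>
              real (card (paths2 E x1 x2)) \<ge> \<delta> * real n ^ (2 * k - 3))"
  proof (rule exI[of _ \<delta>], rule conjI[OF del0], rule exI[of _ n0], intro allI impI ballI)
    fix n :: nat and V :: "nat set" and E x1 x2
    assume n: "n0 \<le> n"
      and H: "kgraph k V E \<and> card V = n \<and>
        real (min_vdeg V E) \<ge> (2 powr (1 - real k) + \<epsilon>) * real ((n - 1) choose (k - 1))"
      and x1: "x1 \<in> V" and x2: "x2 \<in> V" and x12: "x1 \<noteq> x2"
    have kg: "kgraph (Suc r) V E" and cV: "card V = n" using H kr by auto
    have fV: "finite V" using kg by (simp add: kgraph_def)
    have nreal: "real n \<ge> max (4 * (real r ^ 2 + fact r) / e) (1 / \<delta>)"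
    proof -
      have "real n0 \<ge> max (4 * (real r ^ 2 + fact r) / e) (1 / \<delta>)"
        unfolding n0_def by (rule real_nat_ceiling_ge)
      then show ?thesis using n by linarith
    qed
    have nb1: "real n \<ge> 4 * (real r ^ 2 + fact r) / e" using nreal by simp
    have nb2: "\<gamma> * \<eta> ^ 2 * real n \<ge> 1"
    proof -
      have "real n \<ge> 1 / \<delta>" using nreal by simp
      then have "\<delta> * real n \<ge> \<delta> * (1 / \<delta>)" using del0 by (intro mult_left_mono) auto
      moreover have "\<delta> * (1 / \<delta>) = 1" using del0 by simp
      ultimately show ?thesis by (simp add: \<delta>_def mult.assoc)
    qed
    have C0: "real ((n - 1) choose r) \<ge> 0" by simp
    have degs: "real (vdeg E x) \<ge> ((1/2)^r + e) * real ((n - 1) choose r)" if x: "x \<in> V" for x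
    proof -
      have "min_vdeg V E \<le> vdeg E x" unfolding min_vdeg_def using fV x by simp
      then have "real (min_vdeg V E) \<le> real (vdeg E x)" by simp
      moreover have "((1/2)^r + e) * real ((n - 1) choose r) \<le> (2 powr (1 - real k) + \<epsilon>) * real ((n - 1) choose (k - 1))"
      proof -
        have "k - 1 = r" using kr by simp
        then have "(2 powr (1 - real k) + \<epsilon>) * real ((n - 1) choose (k - 1)) = ((1/2)^r + \<epsilon>) * real ((n - 1) choose r)"
          by (simp only: pw)
        moreover have "((1/2)^r + e) * real ((n - 1) choose r) \<le> ((1/2)^r + \<epsilon>) * real ((n - 1) choose r)"
          using e0 C0 by (intro mult_right_mono) auto
        ultimately show ?thesis by simp
      qed
      ultimately show ?thesis using H by linarith
    qed
    have hP: "real (card {v \<in> V - {x1, x2}. \<eta> * real n ^ (r - 1) \<le> real (card {e\<in>E. x1 \<in> e \<and> x2 \<notin> e \<and> v \<in> e})})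
         > (1/2 + e / (4 * real r)) * real n"
      by (rule side[OF kg r1 x1 x2 x12 cV eta0 e0(1) e0(2) degs[OF x1] nb1 etas])
    have hQ: "real (card {v \<in> V - {x2, x1}. \<eta> * real n ^ (r - 1) \<le> real (card {e\<in>E. x2 \<in> e \<and> x1 \<notin> e \<and> v \<in> e})})
         > (1/2 + e / (4 * real r)) * real n"
      using x12 by (intro side[OF kg r1 x2 x1 _ cV eta0 e0(1) e0(2) degs[OF x2] nb1 etas]) auto
    have "real (card (paths2 E x1 x2)) \<ge> \<gamma> * \<eta> ^ 2 * real n ^ (2 * r - 1)"
      by (rule count_main[OF kg r1 x1 x2 x12 cV eta0 gam0 _ _ nb2])
         (use hP hQ in \<open>simp_all add: \<gamma>_def\<close>)
    moreover have "2 * k - 3 = 2 * r - 1" using kr by simp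
    ultimately show "real (card (paths2 E x1 x2)) \<ge> \<delta> * real n ^ (2 * k - 3)" by (simp add: \<delta>_def)
  qed
qed

end
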